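(* Let $\xi_1,\xi_2,\dots$ be i.i.d. standard Gaussian random variables. There are constants $c_3,c_4>0$ such that for all integers $N\ge1$ and all $L\ge2N$, $$c_3N\log(L/N)\le-\log\mathbb{E}\,e^{-L\max_{i=1,\dots,N}|\xi_i|}\le c_4N\log(L/N).$$ *)

theory Defs
  imports "HOL-Probability.Probability"
begin

end

theory Submission
  imports Defs
begin

lemma exp_dens_int: assumes "(0::real) < x"
  shows "(\<integral>\<^sup>+s. ennreal (exponential_density x s) \<partial>lborel) = 1"
proof -
  interpret prob_space "density lborel (exponential_density x)"
    using prob_space_exponential_density[OF assms] .
  have "emeasure (density lborel (exponential_density x)) UNIV = 1"
    using emeasure_space_1 by simp
  then show ?thesis by (simp add: emeasure_density)
qed

lemma exp_dens_int_neg: assumes "(0::real) < x"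
  shows "(\<integral>\<^sup>+s. ennreal (exponential_density x (- s)) \<partial>lborel) = 1"
proof -
  show ?thesis
    using nn_integral_real_affine[of "\<lambda>s. ennreal (exponential_density x s)" "-1" 0] exp_dens_int[OF assms] by simp
qed

lemma std_dens_le: "std_normal_density s \<le> 1 / sqrt (2*pi)"
  unfolding std_normal_density_def by (simp add: divide_simps)

lemma exp_abs_le: assumes "(0::real) < x"
  shows "exp (- x * \<bar>s\<bar>) \<le> (exponential_density x s + exponential_density x (-s)) / x"
  using assms by (cases "s < 0") (auto simp: exponential_density_def field_simps)

lemma upper1:
  assumes D: "distributed M lborel X std_normal_density" and x: "(0::real) < x"
  shows "(\<integral>\<^sup>+\<omega>. ennreal (exp (- x * \<bar>X \<omega>\<bar>)) \<partial>M) \<le> ennreal (1 / x)"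
proof -
  have "(\<integral>\<^sup>+\<omega>. ennreal (exp (- x * \<bar>X \<omega>\<bar>)) \<partial>M)
      = (\<integral>\<^sup>+s. ennreal (std_normal_density s) * ennreal (exp (- x * \<bar>s\<bar>)) \<partial>lborel)"
    by (rule distributed_nn_integral[OF D, symmetric]) simp
  also have "\<dots> \<le> (\<integral>\<^sup>+s. ennreal (1 / (x * sqrt (2*pi))) * (ennreal (exponential_density x s) + ennreal (exponential_density x (-s))) \<partial>lborel)"
  proof (rule nn_integral_mono)
    fix s
    have "std_normal_density s * exp (- x * \<bar>s\<bar>) \<le> (1 / sqrt (2*pi)) * ((exponential_density x s + exponential_density x (-s)) / x)"
      by (rule mult_mono[OF std_dens_le exp_abs_le[OF x]]) auto
    also have "\<dots> = (1 / (x * sqrt (2*pi))) * (exponential_density x s + exponential_density x (-s))"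
      by simp
    finally show "ennreal (std_normal_density s) * ennreal (exp (- x * \<bar>s\<bar>)) \<le> ennreal (1 / (x * sqrt (2*pi))) * (ennreal (exponential_density x s) + ennreal (exponential_density x (-s)))"
      using x by (simp add: ennreal_mult'[symmetric] ennreal_plus[symmetric] exponential_density_nonneg
           del: ennreal_plus)
  qed
  also have "\<dots> = ennreal (1 / (x * sqrt (2*pi))) * 2"
    using exp_dens_int[OF x] exp_dens_int_neg[OF x]
    by (simp add: nn_integral_cmult nn_integral_add one_add_one)
  also have "\<dots> \<le> ennreal (1 / x)"
  proof -
    have "2 \<le> sqrt (2*pi)" using pi_gt3 by (simp add: real_le_rsqrt)
    then have "1 / (x * sqrt (2*pi)) * 2 \<le> 1 / x" using x by (simp add: field_simps)
    moreover have "ennreal (1 / (x * sqrt (2*pi))) * 2 = ennreal (1 / (x * sqrt (2*pi)) * 2)"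
      by (subst ennreal_numeral[symmetric], subst ennreal_mult[symmetric]) (use x in auto)
    ultimately show ?thesis by (simp add: ennreal_leI)
  qed
  finally show ?thesis .
qed

lemma std_dens_ge: assumes "\<bar>s\<bar> \<le> 1/2" shows "1/4 \<le> std_normal_density s"
proof -
  have "\<bar>s\<bar>^2 \<le> (1/2)^2" by (rule power_mono[OF assms abs_ge_zero])
  then have "s\<^sup>2 \<le> 1/4" by (simp add: power_divide)
  then have e1: "exp (- 1/8) \<le> exp (- s\<^sup>2 / 2)" by simp
  have e2: "7/8 \<le> exp (- 1/8 :: real)" using exp_ge_add_one_self[of "-1/8::real"] by simp
  have a: "7/8 \<le> exp (- s\<^sup>2 / 2)" using e1 e2 by linarith
  have "2*pi \<le> (7/2::real)^2" using pi_less_4 by (simp add: power2_eq_square)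
  then have sq: "sqrt (2*pi) \<le> 7/2" using real_sqrt_le_mono by fastforce
  have sp: "sqrt (2*pi) > 0" by simp
  have b: "2/7 \<le> 1 / sqrt (2*pi)" using sq sp by (simp add: divide_simps)
  have "1/4 = (2/7) * (7/8::real)" by simp
  also have "\<dots> \<le> 1 / sqrt (2*pi) * exp (- s\<^sup>2 / 2)"
    by (rule mult_mono[OF b a]) auto
  finally show ?thesis unfolding std_normal_density_def .
qed

lemma lower1:
  assumes D: "distributed M lborel X std_normal_density" and t: "(0::real) < t" "t \<le> 1/2"
  shows "ennreal (t / 2) \<le> (\<integral>\<^sup>+\<omega>. ennreal (if \<bar>X \<omega>\<bar> \<le> t then 1 else 0) \<partial>M)"
proof -
  have "ennreal (t/2) = ennreal (1/4) * emeasure lborel {-t..t}"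
  proof -
    have "emeasure lborel {-t..t} = ennreal (2*t)" using t by simp
    moreover have "t/2 = 1/4 * (2*t)" by simp
    ultimately show ?thesis using t by (simp only: ennreal_mult[symmetric])
  qed
  also have "\<dots> = (\<integral>\<^sup>+s. ennreal (1/4) * indicator {-t..t} s \<partial>lborel)"
    by (simp add: nn_integral_cmult)
  also have "\<dots> \<le> (\<integral>\<^sup>+s. ennreal (std_normal_density s) * ennreal (if \<bar>s\<bar> \<le> t then 1 else 0) \<partial>lborel)"
    proof (rule nn_integral_mono)
    fix s show "ennreal (1/4) * indicator {-t..t} s \<le> ennreal (std_normal_density s) * ennreal (if \<bar>s\<bar> \<le> t then 1 else 0)"
    proof (cases "\<bar>s\<bar> \<le> t")
      case True
      then have "-t \<le> s \<and> s \<le> t" by auto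
      moreover have "1/4 \<le> std_normal_density s" using True t by (intro std_dens_ge) auto
      ultimately show ?thesis using True by (simp add: ennreal_leI)
    next
      case False then show ?thesis by (auto simp: indicator_def)
    qed
  qed
  also have "\<dots> = (\<integral>\<^sup>+\<omega>. ennreal (if \<bar>X \<omega>\<bar> \<le> t then 1 else 0) \<partial>M)"
    by (rule distributed_nn_integral[OF D]) simp
  finally show ?thesis .
qed
lemma (in prob_space) upper1r:
  assumes D: "distributed M lborel X std_normal_density" and x: "(0::real) < x"
  shows "(\<integral>\<omega>. exp (- x * \<bar>X \<omega>\<bar>) \<partial>M) \<le> 1 / x"
proof -
  have [measurable]: "X \<in> borel_measurable M" using distributed_measurable[OF D] by simp
  have "(\<integral>\<omega>. exp (- x * \<bar>X \<omega>\<bar>) \<partial>M) = enn2real (\<integral>\<^sup>+\<omega>. ennreal (exp (- x * \<bar>X \<omega>\<bar>)) \<partial>M)"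
    by (rule integral_eq_nn_integral) auto
  also have "\<dots> \<le> 1 / x" by (rule enn2real_leI) (use x upper1[OF D x] in auto)
  finally show ?thesis .
qed

lemma (in prob_space) lower1r:
  assumes D: "distributed M lborel X std_normal_density" and t: "(0::real) < t" "t \<le> 1/2"
  shows "t / 2 \<le> (\<integral>\<omega>. (if \<bar>X \<omega>\<bar> \<le> t then 1 else 0::real) \<partial>M)"
proof -
  have [measurable]: "X \<in> borel_measurable M" using distributed_measurable[OF D] by simp
  have eq: "(\<integral>\<omega>. (if \<bar>X \<omega>\<bar> \<le> t then 1 else 0::real) \<partial>M) = enn2real (\<integral>\<^sup>+\<omega>. ennreal (if \<bar>X \<omega>\<bar> \<le> t then 1 else 0) \<partial>M)"
    by (rule integral_eq_nn_integral) auto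
  have "(\<integral>\<^sup>+\<omega>. ennreal (if \<bar>X \<omega>\<bar> \<le> t then 1 else 0) \<partial>M) \<le> (\<integral>\<^sup>+\<omega>. 1 \<partial>M)"
    by (rule nn_integral_mono) auto
  also have "\<dots> = 1" by (simp add: emeasure_space_1)
  finally have fin: "(\<integral>\<^sup>+\<omega>. ennreal (if \<bar>X \<omega>\<bar> \<le> t then 1 else 0) \<partial>M) < top"
    by (simp add: order_le_less_trans)
  have "t/2 = enn2real (ennreal (t/2))" using t by simp
  also have "\<dots> \<le> enn2real (\<integral>\<^sup>+\<omega>. ennreal (if \<bar>X \<omega>\<bar> \<le> t then 1 else 0) \<partial>M)"
    by (rule enn2real_mono[OF lower1[OF D t] fin])
  finally show ?thesis using eq by simp
qed
theorem lemma8: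
  fixes M :: "'a measure" and \<xi> :: "nat \<Rightarrow> 'a \<Rightarrow> real"
  assumes "prob_space M"
    and "prob_space.indep_vars M (\<lambda>_. borel) \<xi> {1..}"
    and "\<And>i. i \<ge> 1 \<Longrightarrow> distributed M lborel (\<xi> i) std_normal_density"
  shows "\<exists>c3 c4 :: real. c3 > 0 \<and> c4 > 0 \<and>
    (\<forall>(N::nat) (L::real). N \<ge> 1 \<longrightarrow> L \<ge> 2 * real N \<longrightarrow>
      c3 * real N * ln (L / real N)
        \<le> - ln (prob_space.expectation M (\<lambda>\<omega>. exp (- L * (MAX i\<in>{1..N}. \<bar>\<xi> i \<omega>\<bar>))))
      \<and> - ln (prob_space.expectation M (\<lambda>\<omega>. exp (- L * (MAX i\<in>{1..N}. \<bar>\<xi> i \<omega>\<bar>))))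
        \<le> c4 * real N * ln (L / real N))"
proof -
  interpret P: prob_space M by fact
  have key: "1 * real N * ln (L / real N)
        \<le> - ln (P.expectation (\<lambda>\<omega>. exp (- L * (MAX i\<in>{1..N}. \<bar>\<xi> i \<omega>\<bar>))))
      \<and> - ln (P.expectation (\<lambda>\<omega>. exp (- L * (MAX i\<in>{1..N}. \<bar>\<xi> i \<omega>\<bar>))))
        \<le> 4 * real N * ln (L / real N)"
    if N: "N \<ge> 1" "L \<ge> 2 * real N" for N :: nat and L :: real
  proof -
    define I where "I = {1..N}"
    define Y where "Y \<omega> = (MAX i\<in>I. \<bar>\<xi> i \<omega>\<bar>)" for \<omega>
    define E where "E = P.expectation (\<lambda>\<omega>. exp (- L * Y \<omega>))"
    define x where "x = L / real N"
    have Npos: "real N > 0" using N by simp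
    have Lpos: "L > 0" using N by simp
    have x2: "x \<ge> 2" using N Npos unfolding x_def by (simp add: field_simps)
    have xpos: "x > 0" using x2 by simp
    have Lx: "L = x * real N" unfolding x_def using Npos by simp
    have fI: "finite I" and neI: "I \<noteq> {}" and cI: "card I = N" using N by (auto simp: I_def)
    have D: "\<And>i. i \<in> I \<Longrightarrow> distributed M lborel (\<xi> i) std_normal_density"
      using assms(3) by (auto simp: I_def)
    have [measurable]: "\<And>i. i \<in> I \<Longrightarrow> \<xi> i \<in> borel_measurable M"
      using distributed_measurable[OF D] by simp
    have indep: "P.indep_vars (\<lambda>_. borel) \<xi> I"
      by (rule P.indep_vars_subset[OF assms(2)]) (auto simp: I_def)
    have Ymeas[measurable]: "Y \<in> borel_measurable M"
      unfolding Y_def by (rule borel_measurable_Max) (use fI in auto)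
    have Yge: "\<And>i \<omega>. i \<in> I \<Longrightarrow> \<bar>\<xi> i \<omega>\<bar> \<le> Y \<omega>"
      unfolding Y_def using fI by (intro Max_ge) auto
    have Ynn: "\<And>\<omega>. 0 \<le> Y \<omega>" using Yge neI by (meson abs_ge_zero all_not_in_conv order_trans)
    have intE: "integrable M (\<lambda>\<omega>. exp (- L * Y \<omega>))"
      by (rule P.integrable_const_bound[where B=1]) (use Lpos Ynn in auto)
    have int1: "\<And>i. i \<in> I \<Longrightarrow> integrable M (\<lambda>\<omega>. exp (- x * \<bar>\<xi> i \<omega>\<bar>))"
      by (rule P.integrable_const_bound[where B=1]) (use xpos in auto)
    have indep1: "P.indep_vars (\<lambda>_. borel) (\<lambda>i \<omega>. exp (- x * \<bar>\<xi> i \<omega>\<bar>)) I"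
      by (rule P.indep_vars_compose2[OF indep]) auto
    have pw1: "exp (- L * Y \<omega>) \<le> (\<Prod>i\<in>I. exp (- x * \<bar>\<xi> i \<omega>\<bar>))" for \<omega>
    proof -
      have "(\<Sum>i\<in>I. x * \<bar>\<xi> i \<omega>\<bar>) \<le> (\<Sum>i\<in>I. x * Y \<omega>)"
        by (rule sum_mono) (use xpos Yge in \<open>auto intro: mult_left_mono\<close>)
      also have "\<dots> = L * Y \<omega>" using cI Lx by simp
      finally have "- L * Y \<omega> \<le> (\<Sum>i\<in>I. - x * \<bar>\<xi> i \<omega>\<bar>)" by (simp add: sum_negf)
      then have "exp (- L * Y \<omega>) \<le> exp (\<Sum>i\<in>I. - x * \<bar>\<xi> i \<omega>\<bar>)" by simp
      also have "\<dots> = (\<Prod>i\<in>I. exp (- x * \<bar>\<xi> i \<omega>\<bar>))" by (rule exp_sum[OF fI])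
      finally show ?thesis .
    qed
    have "E \<le> P.expectation (\<lambda>\<omega>. \<Prod>i\<in>I. exp (- x * \<bar>\<xi> i \<omega>\<bar>))"
      unfolding E_def
      by (rule integral_mono[OF intE P.indep_vars_integrable[OF fI indep1 int1] pw1])
    also have "\<dots> = (\<Prod>i\<in>I. P.expectation (\<lambda>\<omega>. exp (- x * \<bar>\<xi> i \<omega>\<bar>)))"
      by (rule P.indep_vars_lebesgue_integral[OF fI indep1 int1])
    also have "\<dots> \<le> (\<Prod>i\<in>I. 1 / x)"
      by (rule prod_mono) (use P.upper1r[OF D xpos] in auto)
    finally have Eup: "E \<le> (1/x) ^ N" using cI by simp
    define t where "t = 1 / x"
    have tpos: "t > 0" and thalf: "t \<le> 1/2" using x2 by (auto simp: t_def field_simps)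
    have Lt: "L * t = real N" unfolding t_def using Lx xpos by simp
    have int2: "\<And>i. i \<in> I \<Longrightarrow> integrable M (\<lambda>\<omega>. if \<bar>\<xi> i \<omega>\<bar> \<le> t then 1 else 0::real)"
      by (rule P.integrable_const_bound[where B=1]) auto
    have indep2: "P.indep_vars (\<lambda>_. borel) (\<lambda>i \<omega>. if \<bar>\<xi> i \<omega>\<bar> \<le> t then 1 else 0::real) I"
      by (rule P.indep_vars_compose2[OF indep]) auto
    have pw2: "exp (- real N) * (\<Prod>i\<in>I. if \<bar>\<xi> i \<omega>\<bar> \<le> t then 1 else 0::real) \<le> exp (- L * Y \<omega>)" for \<omega>
    proof (cases "\<forall>i\<in>I. \<bar>\<xi> i \<omega>\<bar> \<le> t")
      case True
      then have "Y \<omega> \<le> t" unfolding Y_def using fI neI by simp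
      then have "L * Y \<omega> \<le> real N" using Lt Lpos by (metis mult_left_mono less_imp_le)
      then show ?thesis using True by simp
    next
      case False
      then have "(\<Prod>i\<in>I. if \<bar>\<xi> i \<omega>\<bar> \<le> t then 1 else 0::real) = 0"
        using fI by (intro prod_zero) auto
      then show ?thesis by simp
    qed
    have "exp (- real N) * (t/2) ^ N = exp (- real N) * (\<Prod>i\<in>I. t/2)" using cI by simp
    also have "\<dots> \<le> exp (- real N) * (\<Prod>i\<in>I. P.expectation (\<lambda>\<omega>. if \<bar>\<xi> i \<omega>\<bar> \<le> t then 1 else 0::real))"
      by (intro mult_left_mono prod_mono) (use tpos P.lower1r[OF D tpos thalf] in auto)
    also have "\<dots> = exp (- real N) * P.expectation (\<lambda>\<omega>. \<Prod>i\<in>I. if \<bar>\<xi> i \<omega>\<bar> \<le> t then 1 else 0::real)"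
      by (simp add: P.indep_vars_lebesgue_integral[OF fI indep2 int2])
    also have "\<dots> = P.expectation (\<lambda>\<omega>. exp (- real N) * (\<Prod>i\<in>I. if \<bar>\<xi> i \<omega>\<bar> \<le> t then 1 else 0::real))"
      by simp
    also have "\<dots> \<le> E" unfolding E_def
      by (rule integral_mono[OF _ intE pw2])
         (use P.indep_vars_integrable[OF fI indep2 int2] in auto)
    finally have Elow: "exp (- real N) * (t/2) ^ N \<le> E" .
    have lowpos: "0 < exp (- real N) * (t/2) ^ N" using tpos by simp
    have Epos: "E > 0" using Elow lowpos by linarith
    have lnx: "ln x = ln (L / real N)" unfolding x_def ..
    have lnx2: "ln 2 \<le> ln x" using x2 by simp
    have "ln E \<le> ln ((1/x) ^ N)" using Eup Epos by simp
    also have "\<dots> = - real N * ln x" using xpos by (simp add: ln_realpow ln_div)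
    finally have c3: "real N * ln x \<le> - ln E" by simp
    have "ln (exp (- real N) * (t/2) ^ N) \<le> ln E" using Elow lowpos by simp
    moreover have "ln (exp (- real N) * (t/2) ^ N) = - real N - real N * (ln 2 + ln x)"
      using tpos xpos by (simp add: ln_mult ln_realpow ln_div t_def algebra_simps)
    ultimately have "- ln E \<le> real N * (1 + ln 2 + ln x)" by (simp add: algebra_simps)
    also have "\<dots> \<le> real N * (4 * ln x)"
      using ln2_ge_two_thirds lnx2 Npos by (intro mult_left_mono) auto
    finally have c4: "- ln E \<le> 4 * real N * ln x" by simp
    show ?thesis using c3 c4 unfolding E_def Y_def I_def lnx by simp
  qed
  show ?thesis by (rule exI[of _ 1], rule exI[of _ 4]) (use key in auto)
qed

end
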